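(* Let $H$ be a hypergraph with $R(H)=\{1,2\}$, and let $H^2$ be the graph formed by its $2$-edges. If $H^2$ is not bipartite, then \[\pi(H)=1+\pi(H^2)=2-\frac{1}{\chi(H^2)-1},\] where $\chi(H^2)$ is the chromatic number of $H^2$.
   Context: A hypergraph $H=(V,E)$ has finite vertex set $V$ and edge set $E\subseteq 2^V$; $R(H)=\{|F|:F\in E\}$. $H_1\subseteq H_2$ means there is an injective $f\colon V(H_1)\to V(H_2)$ with $f(F)\in E(H_2)$ for all $F\in E(H_1)$. For $G$ on $n$ vertices, $h_n(G)=\sum_{F\in E(G)}1/\binom{n}{|F|}$; $\pi_n(H)=\max\{h_n(G): G\text{ on } n \text{ vertices}, R(G)\subseteq R(H), H\not\subseteq G\}$ and $\pi(H)=\lim_n\pi_n(H)$; for a graph this is the usual Turán density. *)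

theory Defs
  imports Complex_Main
begin

definition hypergraph :: "'a set \<Rightarrow> 'a set set \<Rightarrow> bool" where
  "hypergraph V E \<longleftrightarrow> finite V \<and> E \<subseteq> Pow V"

definition edge_sizes :: "'a set set \<Rightarrow> nat set" where
  "edge_sizes E = card ` E"

definition hyp_sub :: "'a set \<Rightarrow> 'a set set \<Rightarrow> 'b set \<Rightarrow> 'b set set \<Rightarrow> bool" where
  "hyp_sub V1 E1 V2 E2 \<longleftrightarrow>
     (\<exists>f. inj_on f V1 \<and> f ` V1 \<subseteq> V2 \<and> (\<forall>F\<in>E1. f ` F \<in> E2))"

definition lubell :: "nat \<Rightarrow> nat set set \<Rightarrow> real" where
  "lubell n G = (\<Sum>F\<in>G. 1 / real (n choose card F))"

definition pi_n :: "'a set \<Rightarrow> 'a set set \<Rightarrow> nat \<Rightarrow> real" where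
  "pi_n V E n = Max {lubell n G | G. G \<subseteq> Pow {0..<n} \<and> edge_sizes G \<subseteq> edge_sizes E
                                     \<and> \<not> hyp_sub V E {0..<n} G}"

definition two_edges :: "'a set set \<Rightarrow> 'a set set" where
  "two_edges E = {F \<in> E. card F = 2}"

definition colourable :: "'a set \<Rightarrow> 'a set set \<Rightarrow> nat \<Rightarrow> bool" where
  "colourable V E k \<longleftrightarrow>
     (\<exists>c. c ` V \<subseteq> {..<k} \<and> (\<forall>F\<in>E. \<forall>x\<in>F. \<forall>y\<in>F. x \<noteq> y \<longrightarrow> c x \<noteq> c y))"

definition bipartite :: "'a set \<Rightarrow> 'a set set \<Rightarrow> bool" where
  "bipartite V E \<longleftrightarrow> colourable V E 2"

definition chromatic_number :: "'a set \<Rightarrow> 'a set set \<Rightarrow> nat" where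
  "chromatic_number V E = (LEAST k. colourable V E k)"

end

theory Submission
  imports Defs "HOL-Library.FuncSet"
begin


definition deg :: "(nat \<Rightarrow> nat \<Rightarrow> bool) \<Rightarrow> nat set \<Rightarrow> nat \<Rightarrow> nat" where
  "deg adj W x = card {y\<in>W. adj x y}"

definition dsum :: "(nat \<Rightarrow> nat \<Rightarrow> bool) \<Rightarrow> nat set \<Rightarrow> nat" where
  "dsum adj W = card {(x,y). x\<in>W \<and> y\<in>W \<and> adj x y}"

definition hasK :: "(nat \<Rightarrow> nat \<Rightarrow> bool) \<Rightarrow> nat set \<Rightarrow> nat \<Rightarrow> nat \<Rightarrow> bool" where
  "hasK adj W p t \<longleftrightarrow> (\<exists>P. (\<forall>i\<le>p. P i \<subseteq> W \<and> card (P i) = t) \<and>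
      (\<forall>i\<le>p. \<forall>j\<le>p. i \<noteq> j \<longrightarrow> (\<forall>x\<in>P i. \<forall>y\<in>P j. adj x y)))"

lemma card_ind: "finite W \<Longrightarrow> card {y\<in>W. P y} = (\<Sum>y\<in>W. if P y then 1 else 0::nat)"
  by (simp add: sum.If_cases Int_def)

lemma pigeon:
  assumes "finite A" "finite B" "g ` A \<subseteq> B" "card B * (t - 1) < card A"
  shows "\<exists>b\<in>B. t \<le> card {a\<in>A. g a = b}"
proof (rule ccontr)
  assume "\<not> ?thesis"
  then have h: "\<forall>b\<in>B. card {a\<in>A. g a = b} \<le> t - 1" by force
  have "card A = card (\<Union>b\<in>B. {a\<in>A. g a = b})"
    using assms(3) by (intro arg_cong[where f=card]) auto
  also have "\<dots> = (\<Sum>b\<in>B. card {a\<in>A. g a = b})"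
    using assms(1,2) by (intro card_UN_disjoint) auto
  also have "\<dots> \<le> (\<Sum>b\<in>B. t - 1)" using h by (intro sum_mono) auto
  also have "\<dots> = card B * (t - 1)" by simp
  finally show False using assms(4) by simp
qed

lemma ES:
  shows "0 < \<epsilon> \<Longrightarrow> \<exists>N. \<forall>adj W. (\<forall>x y. adj x y \<longrightarrow> adj y x) \<longrightarrow> finite W \<longrightarrow> N \<le> card W \<longrightarrow>
     (\<forall>x\<in>W. ((real p - 1)/real p + \<epsilon>) * real (card W) \<le> real (deg adj W x)) \<longrightarrow> hasK adj W p t"
proof (induction p arbitrary: t \<epsilon>)
  case 0
  show ?case
  proof (intro exI[of _ t] allI impI)
    fix adj :: "nat \<Rightarrow> nat \<Rightarrow> bool" and W :: "nat set" assume "\<forall>x y. adj x y \<longrightarrow> adj y x" "finite W" "t \<le> card W"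
    then obtain A where "A \<subseteq> W" "card A = t" using obtain_subset_with_card_n by metis
    then show "hasK adj W 0 t" unfolding hasK_def by (intro exI[of _ "\<lambda>_. A"]) auto
  qed
next
  case (Suc p)
  have eps: "0 < \<epsilon>" by fact
  define T :: nat where "T = nat \<lceil>2 * real t / ((real p + 1) * \<epsilon>)\<rceil> + 1"
  have T0: "0 < T" unfolding T_def by simp
  have T1: "2 * real t \<le> (real p + 1) * \<epsilon> * real T"
  proof -
    have "2 * real t / ((real p + 1) * \<epsilon>) \<le> real T" unfolding T_def by linarith
    then show ?thesis using eps by (simp add: divide_le_eq mult.commute)
  qed
  obtain N0 where N0: "\<forall>adj W. (\<forall>x y. adj x y \<longrightarrow> adj y x) \<longrightarrow> finite W \<longrightarrow> N0 \<le> card W \<longrightarrow> (\<forall>x\<in>W. ((real p - 1)/real p + \<epsilon>) * real (card W) \<le> real (deg adj W x)) \<longrightarrow> hasK adj W p T"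
    using Suc.IH[of \<epsilon> T] eps by blast
  define K :: nat where "K = (T choose t)^(Suc p)"
  define N where "N = max N0 (nat \<lceil>2 * real t * real K / \<epsilon>\<rceil> + 1)"
  show ?case
  proof (intro exI[of _ N] allI impI)
    fix adj :: "nat \<Rightarrow> nat \<Rightarrow> bool" and W :: "nat set" assume sym: "\<forall>x y. adj x y \<longrightarrow> adj y x" and W: "finite W" "N \<le> card W"
      and dg: "\<forall>x\<in>W. ((real (Suc p) - 1)/real (Suc p) + \<epsilon>) * real (card W) \<le> real (deg adj W x)"
    define n where "n = card W"
    have thr: "(real p - 1)/real p \<le> (real (Suc p) - 1)/real (Suc p)"
    proof (cases "p = 0")
      case True then show ?thesis by simp
    next
      case False
      then have "0 < real p" by simp
      then show ?thesis by (simp add: divide_simps) (simp add: algebra_simps)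
    qed
    have "hasK adj W p T"
    proof -
      have "\<forall>x\<in>W. ((real p - 1)/real p + \<epsilon>) * real (card W) \<le> real (deg adj W x)"
      proof
        fix x assume "x \<in> W"
        have "((real p - 1)/real p + \<epsilon>) * real (card W) \<le> ((real (Suc p) - 1)/real (Suc p) + \<epsilon>) * real (card W)"
          using thr by (intro mult_right_mono) auto
        moreover have "((real (Suc p) - 1)/real (Suc p) + \<epsilon>) * real (card W) \<le> real (deg adj W x)"
          using dg \<open>x\<in>W\<close> by blast
        ultimately show "((real p - 1)/real p + \<epsilon>) * real (card W) \<le> real (deg adj W x)" by linarith
      qed
      moreover have "N0 \<le> card W" using W(2) unfolding N_def by simp
      ultimately show ?thesis using N0 W(1) sym by blast
    qed
    then obtain P where P0: "\<forall>i\<le>p. P i \<subseteq> W \<and> card (P i) = T"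
       "\<forall>i\<le>p. \<forall>j\<le>p. i \<noteq> j \<longrightarrow> (\<forall>x\<in>P i. \<forall>y\<in>P j. adj x y)"
      unfolding hasK_def by blast
    have P: "\<And>i. i\<le>p \<Longrightarrow> P i \<subseteq> W \<and> card (P i) = T"
       "\<And>i j x y. i\<le>p \<Longrightarrow> j\<le>p \<Longrightarrow> i\<noteq>j \<Longrightarrow> x\<in>P i \<Longrightarrow> y\<in>P j \<Longrightarrow> adj x y"
      using P0 by blast+
    have finP: "finite (P i)" if "i \<le> p" for i using P(1)[OF that] W(1) finite_subset by blast
    define c where "c w i = card {u\<in>P i. adj w u}" for w i
    define Good where "Good = {w\<in>W. \<forall>i\<le>p. t \<le> c w i}"
    have d1: "deg adj W u = (\<Sum>w\<in>W. if adj w u then 1 else 0)" for u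
    proof -
      have "{y\<in>W. adj u y} = {y\<in>W. adj y u}" using sym by blast
      then show ?thesis unfolding deg_def by (simp add: card_ind[OF W(1)])
    qed
    have d2: "c w i = (\<Sum>u\<in>P i. if adj w u then 1 else 0)" if "i \<le> p" for w i
      unfolding c_def using card_ind[OF finP[OF that]] by simp
    have dc: "(\<Sum>i\<le>p. \<Sum>u\<in>P i. deg adj W u) = (\<Sum>w\<in>W. \<Sum>i\<le>p. c w i)"
    proof -
      have "(\<Sum>i\<le>p. \<Sum>u\<in>P i. deg adj W u) = (\<Sum>i\<le>p. \<Sum>u\<in>P i. \<Sum>w\<in>W. if adj w u then 1 else 0)"
        by (simp only: d1)
      also have "\<dots> = (\<Sum>i\<le>p. \<Sum>w\<in>W. \<Sum>u\<in>P i. if adj w u then 1 else 0)"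
        by (rule sum.cong[OF refl], rule sum.swap)
      also have "\<dots> = (\<Sum>w\<in>W. \<Sum>i\<le>p. \<Sum>u\<in>P i. if adj w u then 1 else 0)"
        by (rule sum.swap)
      also have "\<dots> = (\<Sum>w\<in>W. \<Sum>i\<le>p. c w i)"
        using d2 by simp
      finally show ?thesis .
    qed
    have cT: "c w i \<le> T" if "i \<le> p" for w i
      unfolding c_def using P(1)[OF that] finP[OF that] by (metis (no_types, lifting) card_mono mem_Collect_eq subsetI)
    have pw: "(\<Sum>i\<le>p. c w i) \<le> (if w \<in> Good then Suc p * T else 0) + (p * T + t)" if "w \<in> W" for w
    proof (cases "w \<in> Good")
      case True
      have "(\<Sum>i\<le>p. c w i) \<le> (\<Sum>i\<le>p. T)" using cT by (intro sum_mono) auto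
      then show ?thesis using True by simp
    next
      case False
      then obtain i0 where i0: "i0 \<le> p" "c w i0 < t" using False \<open>w \<in> W\<close> unfolding Good_def by force
      have "(\<Sum>i\<le>p. c w i) = c w i0 + (\<Sum>i\<in>{..p}-{i0}. c w i)"
        using i0 by (simp add: sum.remove)
      also have "(\<Sum>i\<in>{..p}-{i0}. c w i) \<le> (\<Sum>i\<in>{..p}-{i0}. T)" using cT by (intro sum_mono) auto
      also have "\<dots> = p * T" using i0 by simp
      finally show ?thesis using False i0 by simp
    qed
    have up: "(\<Sum>i\<le>p. \<Sum>u\<in>P i. deg adj W u) \<le> card Good * (Suc p * T) + n * (p * T + t)"
    proof -
      have "(\<Sum>w\<in>W. \<Sum>i\<le>p. c w i) \<le> (\<Sum>w\<in>W. (if w \<in> Good then Suc p * T else 0) + (p * T + t))"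
        using pw by (intro sum_mono) auto
      also have "\<dots> = (\<Sum>w\<in>W. (if w \<in> Good then Suc p * T else 0)) + n * (p * T + t)"
        by (simp add: sum.distrib n_def)
      also have "(\<Sum>w\<in>W. (if w \<in> Good then Suc p * T else 0)) = card Good * (Suc p * T)"
        using W(1) by (simp add: sum.If_cases Good_def Int_def)
      finally show ?thesis using dc by simp
    qed
    have lo: "real (Suc p) * real T * ((real (Suc p) - 1)/real (Suc p) + \<epsilon>) * real n \<le> real (\<Sum>i\<le>p. \<Sum>u\<in>P i. deg adj W u)"
    proof -
      have "(\<Sum>i\<le>p. \<Sum>u\<in>P i. ((real (Suc p) - 1)/real (Suc p) + \<epsilon>) * real n) \<le> (\<Sum>i\<le>p. \<Sum>u\<in>P i. real (deg adj W u))"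
        using dg P(1) n_def by (intro sum_mono) blast
      moreover have "(\<Sum>i\<le>p. \<Sum>u\<in>P i. ((real (Suc p) - 1)/real (Suc p) + \<epsilon>) * real n)
          = real (Suc p) * real T * ((real (Suc p) - 1)/real (Suc p) + \<epsilon>) * real n"
        using P(1) by simp
      ultimately show ?thesis by simp
    qed
    have key: "real (card Good) * (real (Suc p) * real T) \<ge> real (Suc p) * real T * \<epsilon> * real n - real n * real t"
    proof -
      have e: "real (Suc p) * real T * ((real (Suc p) - 1)/real (Suc p) + \<epsilon>) * real n
          = real p * real T * real n + real (Suc p) * real T * \<epsilon> * real n"
        by (simp add: field_simps)
      have "real (\<Sum>i\<le>p. \<Sum>u\<in>P i. deg adj W u) \<le> real (card Good) * (real (Suc p) * real T) + real n * (real p * real T + real t)"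
        using up by (metis of_nat_add of_nat_le_iff of_nat_mult)
      then show ?thesis using lo e by (simp add: algebra_simps)
    qed
    have G1: "real (card Good) \<ge> \<epsilon> * real n / 2"
    proof -
      have "real n * real t \<le> real n * ((real p + 1) * \<epsilon> * real T / 2)"
        using T1 by (intro mult_left_mono) auto
      then have "real (card Good) * (real (Suc p) * real T) \<ge> (\<epsilon> * real n / 2) * (real (Suc p) * real T)"
        using key by (simp add: algebra_simps)
      moreover have "0 < real (Suc p) * real T" using T0 by simp
      ultimately show ?thesis by (meson mult_le_cancel_right_pos)
    qed
    have nbig: "2 * real t * real K / \<epsilon> < real n"
      using W(2) unfolding N_def n_def by linarith
    have Gbig: "K * (t - 1) < card Good"
    proof -
      have "real t * real K < \<epsilon> * real n / 2" using nbig eps by (simp add: field_simps)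
      then have "real (K * t) < real (card Good)" using G1 by (simp add: algebra_simps)
      then have "K * t < card Good" by linarith
      moreover have "K * (t - 1) \<le> K * t" by simp
      ultimately show ?thesis by linarith
    qed
    define B where "B = PiE {..p} (\<lambda>i. {A. A \<subseteq> P i \<and> card A = t})"
    have finB: "finite B" unfolding B_def using finP by (intro finite_PiE) auto
    have cardB: "card B = K"
    proof -
      have "card B = (\<Prod>i\<le>p. card {A. A \<subseteq> P i \<and> card A = t})" unfolding B_def by (simp add: card_PiE)
      also have "\<dots> = (\<Prod>i\<le>p. T choose t)" using finP P(1) by (intro prod.cong refl) (simp add: n_subsets)
      finally show ?thesis unfolding K_def by simp
    qed
    define sel where "sel w i = (SOME A. A \<subseteq> {u\<in>P i. adj w u} \<and> card A = t)" for w i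
    define g where "g w = restrict (sel w) {..p}" for w
    have sel: "sel w i \<subseteq> {u\<in>P i. adj w u} \<and> card (sel w i) = t" if "w \<in> Good" "i \<le> p" for w i
    proof -
      have "t \<le> card {u\<in>P i. adj w u}" using that unfolding Good_def c_def by auto
      then obtain A where "A \<subseteq> {u\<in>P i. adj w u}" "card A = t" using obtain_subset_with_card_n by metis
      then show ?thesis unfolding sel_def by (rule someI[where P="\<lambda>A. A \<subseteq> {u\<in>P i. adj w u} \<and> card A = t", OF conjI])
    qed
    have gB: "g ` Good \<subseteq> B"
    proof (rule image_subsetI)
      fix w assume "w \<in> Good"
      then have "\<forall>i\<le>p. sel w i \<subseteq> P i \<and> card (sel w i) = t" using sel by blast
      then show "g w \<in> B" unfolding B_def g_def by auto
    qed
    have finG: "finite Good" using W(1) unfolding Good_def by simp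
    obtain b where b: "b \<in> B" "t \<le> card {w\<in>Good. g w = b}"
      using pigeon[OF finG finB gB] Gbig cardB by auto
    obtain Q where Q: "Q \<subseteq> {w\<in>Good. g w = b}" "card Q = t" using b(2) obtain_subset_with_card_n by metis
    have bi: "b i \<subseteq> P i \<and> card (b i) = t" if "i \<le> p" for i using b(1) that unfolding B_def by auto
    have Qb: "b i \<subseteq> {u\<in>P i. adj w u}" if "w \<in> Q" "i \<le> p" for w i
    proof -
      have "g w = b" "w \<in> Good" using Q(1) that by auto
      then have "b i = sel w i" using that unfolding g_def by auto
      then show ?thesis using sel \<open>w \<in> Good\<close> that by auto
    qed
    define P' where "P' i = (if i \<le> p then b i else Q)" for i
    have A1: "\<forall>i\<le>Suc p. P' i \<subseteq> W \<and> card (P' i) = t"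
    proof (intro allI impI)
      fix i assume "i \<le> Suc p"
      show "P' i \<subseteq> W \<and> card (P' i) = t"
      proof (cases "i \<le> p")
        case True
        then show ?thesis using bi[OF True] P(1)[OF True] unfolding P'_def by auto
      next
        case False
        have "Q \<subseteq> W" using Q(1) unfolding Good_def by auto
        then show ?thesis using False Q(2) unfolding P'_def by auto
      qed
    qed
    have A2: "\<forall>i\<le>Suc p. \<forall>j\<le>Suc p. i \<noteq> j \<longrightarrow> (\<forall>x\<in>P' i. \<forall>y\<in>P' j. adj x y)"
    proof (intro allI impI ballI)
      fix i j x y assume ij: "i \<le> Suc p" "j \<le> Suc p" "i \<noteq> j"
        and x: "x \<in> P' i" and y: "y \<in> P' j"
      show "adj x y"
      proof (cases "i \<le> p")
        case True
        show ?thesis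
        proof (cases "j \<le> p")
          case True
          then show ?thesis using \<open>i\<le>p\<close> ij x y bi P(2) unfolding P'_def by (metis subsetD)
        next
          case False
          then have "y \<in> Q" using y unfolding P'_def by simp
          then show ?thesis using Qb[of y i] x True sym unfolding P'_def by auto
        qed
      next
        case False
        then have "x \<in> Q" "j \<le> p" using x ij unfolding P'_def by auto
        then show ?thesis using Qb[of x j] y unfolding P'_def by auto
      qed
    qed
    show "hasK adj W (Suc p) t" unfolding hasK_def using A1 A2 by blast
  qed
qed



lemma dsum_fin: "finite W \<Longrightarrow> finite {(a,b). a\<in>W \<and> b\<in>W \<and> adj a b}"
  by (rule finite_subset[of _ "W \<times> W"]) auto

lemma dsum_le: "finite W \<Longrightarrow> dsum adj W \<le> card W * card W"
proof -
  assume f: "finite W"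
  have "dsum adj W \<le> card (W \<times> W)" unfolding dsum_def
    using f by (intro card_mono) auto
  then show ?thesis by (simp add: card_cartesian_product)
qed

lemma hasK_mono:
  assumes "W' \<subseteq> W" "hasK adj W' p t" shows "hasK adj W p t"
proof -
  obtain P where P: "\<forall>i\<le>p. P i \<subseteq> W' \<and> card (P i) = t"
     "\<forall>i\<le>p. \<forall>j\<le>p. i \<noteq> j \<longrightarrow> (\<forall>x\<in>P i. \<forall>y\<in>P j. adj x y)"
    using assms(2) unfolding hasK_def by blast
  have "\<forall>i\<le>p. P i \<subseteq> W \<and> card (P i) = t" using P(1) assms(1) by blast
  then show ?thesis unfolding hasK_def using P(2) by blast
qed

lemma dsum_remove:
  assumes sym: "\<And>x y. adj x y \<Longrightarrow> adj y x" and irr: "\<And>x. \<not> adj x x"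
    and f: "finite W" and x: "x \<in> W"
  shows "dsum adj W = dsum adj (W - {x}) + 2 * deg adj W x"
proof -
  define N where "N = {y\<in>W. adj x y}"
  have N2: "{y\<in>W. adj y x} = N" unfolding N_def using sym by blast
  have eq: "{(a,b). a\<in>W \<and> b\<in>W \<and> adj a b} =
     {(a,b). a\<in>W-{x} \<and> b\<in>W-{x} \<and> adj a b} \<union> (Pair x ` N \<union> (\<lambda>y. (y,x)) ` N)"
    unfolding N_def using x sym by auto
  have finN: "finite N" unfolding N_def using f by simp
  have d1: "(Pair x ` N) \<inter> ((\<lambda>y. (y,x)) ` N) = {}" unfolding N_def using irr by auto
  have d2: "{(a,b). a\<in>W-{x} \<and> b\<in>W-{x} \<and> adj a b} \<inter> (Pair x ` N \<union> (\<lambda>y. (y,x)) ` N) = {}"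
    by auto
  have c1: "card (Pair x ` N) = card N" by (intro card_image) (auto simp: inj_on_def)
  have c2: "card ((\<lambda>y. (y,x)) ` N) = card N" by (intro card_image) (auto simp: inj_on_def)
  have "dsum adj W = card {(a,b). a\<in>W-{x} \<and> b\<in>W-{x} \<and> adj a b} + card (Pair x ` N \<union> (\<lambda>y. (y,x)) ` N)"
    unfolding dsum_def eq
  proof (rule card_Un_disjoint[OF _ _ d2])
    show "finite {(a,b). a\<in>W-{x} \<and> b\<in>W-{x} \<and> adj a b}" using dsum_fin[of "W-{x}" adj] f by blast
    show "finite (Pair x ` N \<union> (\<lambda>y. (y,x)) ` N)" using finN by simp
  qed
  also have "card (Pair x ` N \<union> (\<lambda>y. (y,x)) ` N) = card N + card N"
    using card_Un_disjoint[OF finite_imageI[OF finN] finite_imageI[OF finN] d1] c1 c2 by simp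
  finally show ?thesis unfolding dsum_def deg_def N_def by simp
qed

lemma peel:
  assumes sym: "\<And>x y. adj x y \<Longrightarrow> adj y x" and irr: "\<And>x. \<not> adj x x" and c0: "0 \<le> c"
  shows "finite W \<Longrightarrow> c * real (card W) * (real (card W) + 1) + D0 \<le> real (dsum adj W) \<Longrightarrow>
    \<exists>W'\<subseteq>W. c * real (card W') * (real (card W') + 1) + D0 \<le> real (dsum adj W') \<and>
        (\<forall>x\<in>W'. c * real (card W') \<le> real (deg adj W' x))"
proof (induction "card W" arbitrary: W rule: less_induct)
  case less
  show ?case
  proof (cases "\<forall>x\<in>W. c * real (card W) \<le> real (deg adj W x)")
    case True then show ?thesis using less.prems by blast
  next
    case False
    then obtain x where x: "x \<in> W" "real (deg adj W x) < c * real (card W)" by force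
    define m where "m = card W"
    have m1: "1 \<le> m" unfolding m_def using x(1) less.prems(1) by (metis One_nat_def Suc_leI card_gt_0_iff empty_iff)
    have cw: "card (W - {x}) = m - 1" unfolding m_def using x(1) less.prems(1) by simp
    have rm: "real (card (W - {x})) = real m - 1" using cw m1 by simp
    have ds: "dsum adj W = dsum adj (W - {x}) + 2 * deg adj W x"
      using dsum_remove[OF sym irr less.prems(1) x(1)] .
    have "c * real m * (real m + 1) + D0 \<le> real (dsum adj (W - {x})) + 2 * real (deg adj W x)"
      using less.prems(2) ds unfolding m_def by simp
    then have "c * (real m - 1) * (real m - 1 + 1) + D0 \<le> real (dsum adj (W - {x}))"
      using x(2) unfolding m_def[symmetric] by (simp add: algebra_simps)
    then have h: "c * real (card (W - {x})) * (real (card (W - {x})) + 1) + D0 \<le> real (dsum adj (W - {x}))"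
      using rm by simp
    have lt: "card (W - {x}) < card W" using cw m1 unfolding m_def by simp
    obtain W' where "W' \<subseteq> W - {x}" "c * real (card W') * (real (card W') + 1) + D0 \<le> real (dsum adj W')"
        "\<forall>x\<in>W'. c * real (card W') \<le> real (deg adj W' x)"
      using less.hyps[OF lt _ h] less.prems(1) by blast
    then show ?thesis by blast
  qed
qed

lemma turan_bound:
  assumes e: "0 < \<epsilon>"
  shows "\<exists>C\<ge>0. \<forall>adj W. (\<forall>x y. adj x y \<longrightarrow> adj y x) \<longrightarrow> (\<forall>x. \<not> adj x x) \<longrightarrow> finite W \<longrightarrow> \<not> hasK adj W p t \<longrightarrow>
     real (dsum adj W) \<le> ((real p - 1)/real p + \<epsilon>) * real (card W) * (real (card W) + 1) + C"
proof -
  obtain N where N: "\<forall>adj W. (\<forall>x y. adj x y \<longrightarrow> adj y x) \<longrightarrow> finite W \<longrightarrow> N \<le> card W \<longrightarrow>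
     (\<forall>x\<in>W. ((real p - 1)/real p + \<epsilon>) * real (card W) \<le> real (deg adj W x)) \<longrightarrow> hasK adj W p t"
    using ES[where \<epsilon>=\<epsilon> and p=p and t=t] e by blast
  define c where "c = (real p - 1)/real p + \<epsilon>"
  have a0: "0 \<le> (real p - 1)/real p"
    by (cases "p = 0") auto
  have c0: "0 \<le> c" unfolding c_def using a0 e by simp
  define C where "C = real N * real N + 1"
  show ?thesis
  proof (intro exI[of _ C] conjI allI impI)
    show "0 \<le> C" unfolding C_def by simp
  next
    fix adj :: "nat \<Rightarrow> nat \<Rightarrow> bool" and W :: "nat set" assume sym0: "\<forall>x y. adj x y \<longrightarrow> adj y x" and irr0: "\<forall>x. \<not> adj x x"
      and f: "finite W" and nk: "\<not> hasK adj W p t"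
    have sym: "\<And>x y. adj x y \<Longrightarrow> adj y x" using sym0 by blast
    have irr: "\<And>x. \<not> adj x x" using irr0 by blast
    show "real (dsum adj W) \<le> ((real p - 1)/real p + \<epsilon>) * real (card W) * (real (card W) + 1) + C"
    proof (rule ccontr)
      assume "\<not> ?thesis"
      then have h: "c * real (card W) * (real (card W) + 1) + C \<le> real (dsum adj W)"
        unfolding c_def by linarith
      obtain W' where W': "W' \<subseteq> W" "c * real (card W') * (real (card W') + 1) + C \<le> real (dsum adj W')"
        "\<forall>x\<in>W'. c * real (card W') \<le> real (deg adj W' x)"
        using peel[OF sym irr c0 f h] by blast
      have fW': "finite W'" using W'(1) f finite_subset by blast
      have "0 \<le> c * real (card W') * (real (card W') + 1)" using c0 by simp
      then have "C \<le> real (dsum adj W')" using W'(2) by linarith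
      also have "\<dots> \<le> real (card W') * real (card W')" using dsum_le[OF fW', of adj]
        by (metis of_nat_le_iff of_nat_mult)
      finally have "real N * real N < real (card W') * real (card W')" unfolding C_def by simp
      then have "N \<le> card W'"
      proof -
        assume lt: "real N * real N < real (card W') * real (card W')"
        show ?thesis
        proof (rule ccontr)
          assume "\<not> N \<le> card W'"
          then have "card W' * card W' \<le> N * N" by (intro mult_mono) auto
          then have "real (card W' * card W') \<le> real (N * N)" by (simp only: of_nat_le_iff)
          then show False using lt by simp
        qed
      qed
      then have "hasK adj W' p t" using N fW' W'(3) sym0 unfolding c_def by blast
      then show False using hasK_mono[OF W'(1)] nk by blast
    qed
  qed
qed



definition adjG :: "nat set set \<Rightarrow> nat \<Rightarrow> nat \<Rightarrow> bool" where
  "adjG G x y \<longleftrightarrow> x \<noteq> y \<and> {x,y} \<in> G"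

definition Sg :: "nat set set \<Rightarrow> nat \<Rightarrow> nat set" where
  "Sg G n = {x\<in>{0..<n}. {x} \<in> G}"

lemma adjG_sym: "\<forall>x y. adjG G x y \<longrightarrow> adjG G y x" unfolding adjG_def by (auto simp: insert_commute)
lemma adjG_irr: "\<forall>x. \<not> adjG G x x" unfolding adjG_def by auto

lemma choose2: "2 * (n choose 2) = n * (n - 1)"
proof (induction n)
  case 0 then show ?case by simp
next
  case (Suc n)
  have "(Suc n choose 2) = (n choose 1) + (n choose 2)" by (simp add: numeral_2_eq_2)
  then show ?case using Suc by (cases n) (auto simp: algebra_simps)
qed

lemma card2_eq: "card F = 2 \<Longrightarrow> x \<in> F \<Longrightarrow> y \<in> F \<Longrightarrow> x \<noteq> y \<Longrightarrow> F = {x,y}"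
proof -
  assume a: "card F = 2" "x \<in> F" "y \<in> F" "x \<noteq> y"
  then have "finite F" by (metis card.infinite zero_neq_numeral)
  moreover have "{x,y} \<subseteq> F" using a by auto
  moreover have "card {x,y} = card F" using a by simp
  ultimately show ?thesis by (metis card_subset_eq)
qed

lemma two_card:
  assumes G: "G \<subseteq> Pow {0..<n}"
  shows "dsum (adjG G) {0..<n} = 2 * card {F\<in>G. card F = 2}"
proof -
  define Pr where "Pr = {(a,b). a\<in>{0..<n} \<and> b\<in>{0..<n} \<and> adjG G a b}"
  define Lo where "Lo = {(a,b). a\<in>{0..<n} \<and> b\<in>{0..<n} \<and> adjG G a b \<and> a < b}"
  define Hi where "Hi = {(a,b). a\<in>{0..<n} \<and> b\<in>{0..<n} \<and> adjG G a b \<and> b < a}"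
  have finPr: "finite Pr" unfolding Pr_def using dsum_fin[of "{0..<n}"] by simp
  have PrU: "Pr = Lo \<union> Hi" unfolding Pr_def Lo_def Hi_def adjG_def by auto
  have dis: "Lo \<inter> Hi = {}" unfolding Lo_def Hi_def by auto
  have finLo: "finite Lo" using finPr PrU by simp
  have finHi: "finite Hi" using finPr PrU by simp
  have HiS: "Hi = prod.swap ` Lo" unfolding Hi_def Lo_def adjG_def
    by (auto simp: insert_commute image_iff)
  have cHi: "card Hi = card Lo" unfolding HiS by (intro card_image) (auto simp: inj_on_def prod_eq_iff)
  have inj: "inj_on (\<lambda>(a,b). {a,b}) Lo"
    unfolding inj_on_def Lo_def by (auto simp: doubleton_eq_iff)
  have img: "(\<lambda>(a,b). {a,b}) ` Lo = {F\<in>G. card F = 2}"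
  proof
    show "(\<lambda>(a,b). {a,b}) ` Lo \<subseteq> {F\<in>G. card F = 2}" unfolding Lo_def adjG_def by auto
  next
    show "{F\<in>G. card F = 2} \<subseteq> (\<lambda>(a,b). {a,b}) ` Lo"
    proof
      fix F assume F: "F \<in> {F\<in>G. card F = 2}"
      then obtain x y where xy: "F = {x,y}" "x \<noteq> y" by (auto simp: card_2_iff)
      have "F \<subseteq> {0..<n}" using F G by auto
      then have xn: "x < n" "y < n" using xy by auto
      show "F \<in> (\<lambda>(a,b). {a,b}) ` Lo"
      proof (cases "x < y")
        case True
        then have "(x,y) \<in> Lo" unfolding Lo_def adjG_def using xy F xn by auto
        then show ?thesis using xy by force
      next
        case False
        then have "(y,x) \<in> Lo" unfolding Lo_def adjG_def using xy F xn by (auto simp: insert_commute)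
        then show ?thesis using xy by (force simp: insert_commute)
      qed
    qed
  qed
  have "dsum (adjG G) {0..<n} = card Pr" unfolding dsum_def Pr_def by simp
  also have "\<dots> = card Lo + card Hi" unfolding PrU using finLo finHi dis by (rule card_Un_disjoint)
  finally have "dsum (adjG G) {0..<n} = card Lo + card Hi" .
  moreover have "card Lo = card {F\<in>G. card F = 2}" using card_image[OF inj] img by simp
  ultimately show ?thesis using cHi by simp
qed

lemma lubell_formula:
  assumes G: "G \<subseteq> Pow {0..<n}" and sz: "\<forall>F\<in>G. card F = 1 \<or> card F = 2" and n: "2 \<le> n"
  shows "lubell n G = real (card (Sg G n)) / real n + real (dsum (adjG G) {0..<n}) / (real n * (real n - 1))"
proof -
  have finG: "finite G" using G finite_subset by (metis finite_Pow_iff finite_atLeastLessThan)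
  define G1 where "G1 = {F\<in>G. card F = 1}"
  define G2 where "G2 = {F\<in>G. card F = 2}"
  have GU: "G = G1 \<union> G2" unfolding G1_def G2_def using sz by auto
  have dis: "G1 \<inter> G2 = {}" unfolding G1_def G2_def by auto
  have f1: "finite G1" "finite G2" using finG unfolding G1_def G2_def by auto
  have "lubell n G = (\<Sum>F\<in>G1. 1 / real (n choose card F)) + (\<Sum>F\<in>G2. 1 / real (n choose card F))"
    unfolding lubell_def GU using f1 dis by (rule sum.union_disjoint)
  also have "(\<Sum>F\<in>G1. 1 / real (n choose card F)) = (\<Sum>F\<in>G1. 1 / real n)"
    unfolding G1_def by (intro sum.cong refl) simp
  also have "\<dots> = real (card G1) / real n" by simp
  also have "(\<Sum>F\<in>G2. 1 / real (n choose card F)) = (\<Sum>F\<in>G2. 1 / real (n choose 2))"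
    unfolding G2_def by (intro sum.cong refl) simp
  also have "\<dots> = real (card G2) / real (n choose 2)" by simp
  finally have L: "lubell n G = real (card G1) / real n + real (card G2) / real (n choose 2)" .
  have c1: "card G1 = card (Sg G n)"
  proof -
    have "G1 = (\<lambda>x. {x}) ` Sg G n"
    proof
      show "G1 \<subseteq> (\<lambda>x. {x}) ` Sg G n"
      proof
        fix F assume "F \<in> G1"
        then have F: "F \<in> G" "card F = 1" unfolding G1_def by auto
        then obtain x where x: "F = {x}" by (metis card_1_singletonE)
        then have "x < n" using F G by auto
        then show "F \<in> (\<lambda>x. {x}) ` Sg G n" using x F unfolding Sg_def by auto
      qed
      show "(\<lambda>x. {x}) ` Sg G n \<subseteq> G1" unfolding Sg_def G1_def by auto
    qed
    then show ?thesis by (simp add: card_image)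
  qed
  have c2: "real (dsum (adjG G) {0..<n}) = 2 * real (card G2)"
    using two_card[OF G] unfolding G2_def by simp
  have ch: "real (n choose 2) = real n * (real n - 1) / 2"
  proof -
    have "real (2 * (n choose 2)) = real (n * (n - 1))" using choose2 by metis
    then show ?thesis using n by (simp add: of_nat_diff)
  qed
  have np: "0 < real n * (real n - 1)" using n by simp
  have e2: "real (card G2) / real (n choose 2) = real (dsum (adjG G) {0..<n}) / (real n * (real n - 1))"
    unfolding ch c2 by (simp add: mult.commute)
  show ?thesis unfolding L c1 e2 ..
qed

lemma embed:
  fixes V :: "'a set" and c :: "'a \<Rightarrow> nat"
  assumes fV: "finite V" and EV: "E' \<subseteq> Pow V" and col: "\<forall>x\<in>V. c x < Suc r"
    and prp: "\<forall>F\<in>E'. card F = 2 \<longrightarrow> (\<forall>x\<in>F. \<forall>y\<in>F. x \<noteq> y \<longrightarrow> c x \<noteq> c y)"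
    and sz: "\<forall>F\<in>E'. card F = 1 \<or> card F = 2"
    and sing: "\<forall>F\<in>E'. card F = 1 \<longrightarrow> (\<forall>x\<in>W. {x} \<in> G)"
    and Wn: "W \<subseteq> {0..<n}" and K: "hasK (adjG G) W r (card V)"
  shows "hyp_sub V E' {0..<n} G"
proof -
  obtain P where P0: "\<forall>i\<le>r. P i \<subseteq> W \<and> card (P i) = card V"
     "\<forall>i\<le>r. \<forall>j\<le>r. i \<noteq> j \<longrightarrow> (\<forall>x\<in>P i. \<forall>y\<in>P j. adjG G x y)"
    using K unfolding hasK_def by blast
  obtain idx where idx: "bij_betw idx V {0..<card V}" using ex_bij_betw_finite_nat[OF fV] by blast
  define ph where "ph i = (SOME h. bij_betw h {0..<card V} (P i))" for i
  have ph: "bij_betw (ph i) {0..<card V} (P i)" if "i \<le> r" for i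
  proof -
    have "finite (P i)" using P0(1) that Wn finite_subset by (metis finite_atLeastLessThan)
    then obtain h where "bij_betw h {0..<card (P i)} (P i)" using ex_bij_betw_nat_finite by blast
    then have "bij_betw h {0..<card V} (P i)" using P0(1) that by simp
    then show ?thesis unfolding ph_def by (rule someI[where P="\<lambda>h. bij_betw h {0..<card V} (P i)"])
  qed
  define f where "f x = ph (c x) (idx x)" for x
  have fP: "f x \<in> P (c x)" if "x \<in> V" for x
  proof -
    have "idx x \<in> {0..<card V}" using idx that by (meson bij_betwE)
    then show ?thesis unfolding f_def using ph[of "c x"] col that by (meson bij_betwE less_Suc_eq_le)
  qed
  have cr: "c x \<le> r" if "x \<in> V" for x using col that by (simp add: less_Suc_eq_le)
  have adjf: "adjG G (f x) (f y)" if "x \<in> V" "y \<in> V" "c x \<noteq> c y" for x y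
    using P0(2) cr fP that by blast
  have inj: "inj_on f V"
  proof (rule inj_onI)
    fix x y assume xy: "x \<in> V" "y \<in> V" "f x = f y"
    show "x = y"
    proof (cases "c x = c y")
      case False
      then show ?thesis using adjf[OF xy(1,2)] xy(3) unfolding adjG_def by simp
    next
      case True
      have "ph (c x) (idx x) = ph (c x) (idx y)" using xy(3) True unfolding f_def by simp
      moreover have "idx x \<in> {0..<card V}" "idx y \<in> {0..<card V}" using idx xy by (meson bij_betwE)+
      ultimately have "idx x = idx y" using ph[OF cr[OF xy(1)]] unfolding bij_betw_def inj_on_def by blast
      then show ?thesis using idx xy unfolding bij_betw_def inj_on_def by blast
    qed
  qed
  have img: "f ` V \<subseteq> {0..<n}" using fP P0(1) cr Wn by blast
  have edges: "\<forall>F\<in>E'. f ` F \<in> G"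
  proof
    fix F assume F: "F \<in> E'"
    then have FV: "F \<subseteq> V" using EV by auto
    show "f ` F \<in> G"
    proof (cases "card F = 1")
      case True
      then obtain x where x: "F = {x}" by (metis card_1_singletonE)
      have "f x \<in> W" using fP[of x] x FV P0(1) cr[of x] by auto
      moreover have "\<forall>x\<in>W. {x} \<in> G" using sing F True by blast
      ultimately show ?thesis using x by simp
    next
      case False
      then have c2: "card F = 2" using sz F by auto
      then obtain x y where xy: "F = {x,y}" "x \<noteq> y" by (auto simp: card_2_iff)
      have "c x \<noteq> c y" using prp F c2 xy by auto
      then have "adjG G (f x) (f y)" using adjf xy FV by auto
      then show ?thesis using xy unfolding adjG_def by simp
    qed
  qed
  show ?thesis unfolding hyp_sub_def using inj img edges by blast
qed

definition Tur :: "nat \<Rightarrow> nat \<Rightarrow> nat set set" where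
  "Tur r n = {{i,j} | i j. i < n \<and> j < n \<and> i mod r \<noteq> j mod r}"

definition Sing :: "nat \<Rightarrow> nat set set" where
  "Sing n = {{i} | i. i < n}"

lemma tur_no_embed:
  fixes V :: "'a set"
  assumes r0: "0 < r" and E2: "\<forall>F\<in>E2. card F = 2" and E2V: "E2 \<subseteq> Pow V" and sub: "E2 \<subseteq> E'"
    and hs: "hyp_sub V E' {0..<n} G'" and GT: "G' \<subseteq> Tur r n \<union> Sing n"
  shows "colourable V E2 r"
proof -
  obtain f where f: "inj_on f V" "f ` V \<subseteq> {0..<n}" "\<forall>F\<in>E'. f ` F \<in> G'"
    using hs unfolding hyp_sub_def by blast
  show ?thesis unfolding colourable_def
  proof (intro exI[of _ "\<lambda>x. f x mod r"] conjI ballI impI)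
    show "(\<lambda>x. f x mod r) ` V \<subseteq> {..<r}" using r0 by auto
  next
    fix F x y assume F: "F \<in> E2" and xy: "x \<in> F" "y \<in> F" "x \<noteq> y"
    have FV: "F \<subseteq> V" using F E2V by auto
    have Fe: "F = {x,y}" using E2 F xy by (intro card2_eq) auto
    have "x \<in> V" "y \<in> V" using FV xy by auto
    then have fne: "f x \<noteq> f y" using f(1) xy(3) by (meson inj_on_contraD)
    have "f ` F \<in> G'" using f(3) F sub by blast
    then have m: "{f x, f y} \<in> Tur r n \<union> Sing n" using GT Fe by auto
    have "{f x, f y} \<notin> Sing n"
    proof
      assume "{f x, f y} \<in> Sing n"
      then obtain i where "{f x, f y} = {i}" unfolding Sing_def mem_Collect_eq by blast
      then have "f x = i \<and> f y = i" by blast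
      then show False using fne by simp
    qed
    then have "{f x, f y} \<in> Tur r n" using m by blast
    then obtain i j where ij: "{f x, f y} = {i,j}" "i mod r \<noteq> j mod r" unfolding Tur_def mem_Collect_eq by blast
    then have "(f x = i \<and> f y = j) \<or> (f x = j \<and> f y = i)" by (simp add: doubleton_eq_iff)
    then show "f x mod r \<noteq> f y mod r" using ij(2) by auto
  qed
qed

lemma class_card: "0 < r \<Longrightarrow> card {j\<in>{0..<n}. j mod r = k} \<le> n div r + 1"
proof -
  assume r: "0 < r"
  have "card {j\<in>{0..<n}. j mod r = k} \<le> card {0..n div r}"
  proof (rule card_inj_on_le[where f="\<lambda>j. j div r"])
    show "inj_on (\<lambda>j. j div r) {j\<in>{0..<n}. j mod r = k}"
      unfolding inj_on_def by (metis (mono_tags, lifting) div_mult_mod_eq mem_Collect_eq)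
    show "(\<lambda>j. j div r) ` {j\<in>{0..<n}. j mod r = k} \<subseteq> {0..n div r}"
    proof (rule image_subsetI)
      fix j assume "j \<in> {j\<in>{0..<n}. j mod r = k}"
      then have "j \<le> n" by auto
      then show "j div r \<in> {0..n div r}" by (simp add: div_le_mono)
    qed
  qed simp
  then show ?thesis by simp
qed

lemma tur_count:
  assumes r0: "0 < r" and TG: "Tur r n \<subseteq> G'"
  shows "real n * real n - real n * (real n / real r + 1) \<le> real (dsum (adjG G') {0..<n})"
proof -
  define D where "D = {(i,j). i\<in>{0..<n} \<and> j\<in>{0..<n} \<and> i mod r \<noteq> j mod r}"
  define Sm where "Sm = {(i,j). i\<in>{0..<n} \<and> j\<in>{0..<n} \<and> i mod r = j mod r}"
  have DP: "D \<subseteq> {(x,y). x\<in>{0..<n} \<and> y\<in>{0..<n} \<and> adjG G' x y}"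
  proof
    fix z assume "z \<in> D"
    then obtain i j where z: "z = (i,j)" "i < n" "j < n" "i mod r \<noteq> j mod r" unfolding D_def by auto
    then have "{i,j} \<in> Tur r n" unfolding Tur_def mem_Collect_eq by blast
    then have "{i,j} \<in> G'" using TG by blast
    moreover have "i \<noteq> j" using z by auto
    ultimately show "z \<in> {(x,y). x\<in>{0..<n} \<and> y\<in>{0..<n} \<and> adjG G' x y}" using z unfolding adjG_def by auto
  qed
  have c1: "card D \<le> dsum (adjG G') {0..<n}" unfolding dsum_def
    using DP dsum_fin[of "{0..<n}" "adjG G'"] by (intro card_mono) auto
  have U: "D \<union> Sm = {0..<n} \<times> {0..<n}" "D \<inter> Sm = {}" unfolding D_def Sm_def by auto
  have fD: "finite D" "finite Sm" using U(1) by (metis finite_SigmaI finite_Un finite_atLeastLessThan)+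
  have c2: "card D + card Sm = n * n" using card_Un_disjoint[OF fD U(2)] U(1) by (simp add: card_cartesian_product)
  have SmS: "Sm = Sigma {0..<n} (\<lambda>i. {j\<in>{0..<n}. j mod r = i mod r})" unfolding Sm_def by auto
  have "card Sm = (\<Sum>i\<in>{0..<n}. card {j\<in>{0..<n}. j mod r = i mod r})"
    unfolding SmS by (rule card_SigmaI) auto
  also have "\<dots> \<le> (\<Sum>i\<in>{0..<n}. n div r + 1)" using class_card[OF r0] by (intro sum_mono) auto
  finally have c3: "card Sm \<le> n * (n div r + 1)" by simp
  have "real (n div r) \<le> real n / real r" by (rule of_nat_div_le_of_nat)
  then have "real (card Sm) \<le> real n * (real n / real r + 1)"
  proof -
    assume h: "real (n div r) \<le> real n / real r"
    have "real (card Sm) \<le> real n * (real (n div r) + 1)" using c3 by (metis of_nat_1 of_nat_add of_nat_le_iff of_nat_mult)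
    also have "\<dots> \<le> real n * (real n / real r + 1)" using h by (intro mult_left_mono) auto
    finally show ?thesis .
  qed
  moreover have "real (card D) + real (card Sm) = real n * real n" using c2 by (metis of_nat_add of_nat_mult)
  moreover have "real (card D) \<le> real (dsum (adjG G') {0..<n})" using c1 by simp
  ultimately show ?thesis by linarith
qed



lemma ineqA:
  fixes a e C n s :: real
  assumes a: "1/2 \<le> a" "a \<le> 1" and e: "0 < e" and C: "0 \<le> C" and s: "0 \<le> s" "s \<le> n"
    and n: "2 \<le> n" and big: "3 + 3*e + C \<le> e * n"
  shows "s / n + ((a+e) * s * (s+1) + C + n*n - s*s) / (n * (n - 1)) \<le> 1 + a + 2*e"
proof -
  have np: "0 < n * (n - 1)" using n by simp
  have k1: "0 \<le> (n - s) * (a*n - (1-a)*s)"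
    using s a n by (intro mult_nonneg_nonneg) (auto intro!: mult_mono)
  have k2: "s*s \<le> n*n" using s by (intro mult_mono) auto
  have k3: "(a+e) * s \<le> (a+e) * n" using s a e by (intro mult_left_mono) auto
  have k4: "(3+3*e+C) * n \<le> (e*n) * n" using big n by (intro mult_right_mono) auto
  have k5: "C \<le> C * n" using C n by (simp add: mult_le_cancel_left1)
  have k6: "s \<le> s * n" using s n by (simp add: mult_le_cancel_left1)
  have k7: "e*(s*s) \<le> e*(n*n)" using k2 e by simp
  have k8: "a*n \<le> n" using a n by (simp add: mult_le_cancel_right1)
  have "s * (n - 1) + ((a+e) * s * (s+1) + C + n*n - s*s) \<le> (1 + a + 2*e) * (n * (n - 1))"
    using k1 k2 k3 k4 k5 k6 k7 k8 e a s n by (simp only: algebra_simps)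
  then have "(s * (n - 1) + ((a+e) * s * (s+1) + C + n*n - s*s)) / (n * (n - 1)) \<le> 1 + a + 2*e"
    using np by (simp add: divide_le_eq)
  moreover have "s / n = s * (n - 1) / (n * (n - 1))" using n by simp
  ultimately show ?thesis by (simp add: add_divide_distrib)
qed

lemma ineqB:
  fixes a e C n d :: real
  assumes a: "0 \<le> a" "a \<le> 1" and e: "0 < e" and C: "0 \<le> C"
    and n: "2 \<le> n" and big: "3 + 3*e + C \<le> e * n" and d: "d \<le> (a + e) * n * (n+1) + C"
  shows "d / (n * (n - 1)) \<le> a + 2*e"
proof -
  have np: "0 < n * (n - 1)" using n by simp
  have k4: "(3+3*e+C) * n \<le> (e*n) * n" using big n by (intro mult_right_mono) auto
  have k5: "C \<le> C * n" using C n by (simp add: mult_le_cancel_left1)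
  have k6: "a * n \<le> n" using a n by (simp add: mult_le_cancel_right1)
  have "d \<le> (a + 2*e) * (n * (n - 1))" using d k4 k5 k6 e n by (simp only: algebra_simps)
  then show ?thesis using np by (simp add: divide_le_eq)
qed

lemma ineqL:
  fixes r n d :: real
  assumes r: "1 \<le> r" and n: "2 \<le> n" and d: "n*n - n*(n/r + 1) \<le> d"
  shows "(1 - 1/r) - 1/(n-1) \<le> d / (n*(n-1))"
proof -
  have np: "0 < n * (n - 1)" using n by simp
  have h: "1/(n-1) * (n*(n-1)) = n" using n by (simp add: field_simps)
  have "((1 - 1/r) - 1/(n-1)) * (n * (n-1)) = (1-1/r) * (n*(n-1)) - 1/(n-1) * (n*(n-1))"
    by (simp only: left_diff_distrib)
  also have "\<dots> = n * ((1-1/r) * (n-1) - 1)" unfolding h by (simp only: algebra_simps)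
  also have "\<dots> \<le> n * ((1 - 1/r) * n - 1)"
  proof -
    have "0 \<le> 1 - 1/r" using r by simp
    then have "(1-1/r) * (n-1) \<le> (1-1/r) * n" by (intro mult_left_mono) auto
    then show ?thesis using n by (intro mult_left_mono) auto
  qed
  also have "\<dots> = n*n - n*(n/r + 1)" by (simp add: algebra_simps)
  also have "\<dots> \<le> d" by fact
  finally show ?thesis using np by (simp add: le_divide_eq)
qed



definition piset :: "'a set \<Rightarrow> 'a set set \<Rightarrow> nat \<Rightarrow> nat set set set" where
  "piset V E n = {G. G \<subseteq> Pow {0..<n} \<and> edge_sizes G \<subseteq> edge_sizes E \<and> \<not> hyp_sub V E {0..<n} G}"

lemma pi_n_alt: "pi_n V E n = Max (lubell n ` piset V E n)"
  unfolding pi_n_def piset_def by (intro arg_cong[where f=Max]) auto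

lemma piset_fin: "finite (piset V E n)"
  unfolding piset_def by (rule finite_subset[of _ "Pow (Pow {0..<n})"]) auto

lemma empty_piset: "E \<noteq> {} \<Longrightarrow> {} \<in> piset V E n"
  unfolding piset_def hyp_sub_def edge_sizes_def by auto

lemma pi_ge: "G \<in> piset V E n \<Longrightarrow> lubell n G \<le> pi_n V E n"
  unfolding pi_n_alt using piset_fin by (intro Max_ge) auto

lemma pi_att: "E \<noteq> {} \<Longrightarrow> \<exists>G\<in>piset V E n. pi_n V E n = lubell n G"
proof -
  assume "E \<noteq> {}"
  then have "lubell n ` piset V E n \<noteq> {}" using empty_piset by blast
  then have "Max (lubell n ` piset V E n) \<in> lubell n ` piset V E n" using piset_fin by (intro Max_in) auto
  then show ?thesis unfolding pi_n_alt by auto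
qed

lemma dsum_split:
  assumes "S \<subseteq> W" "finite W"
  shows "dsum adj W \<le> dsum adj S + (card W * card W - card S * card S)"
proof -
  have fS: "finite S" using assms finite_subset by blast
  have "{(x,y). x\<in>W \<and> y\<in>W \<and> adj x y} \<subseteq> {(x,y). x\<in>S \<and> y\<in>S \<and> adj x y} \<union> (W\<times>W - S\<times>S)" by auto
  then have "dsum adj W \<le> card ({(x,y). x\<in>S \<and> y\<in>S \<and> adj x y} \<union> (W\<times>W - S\<times>S))"
    unfolding dsum_def using assms fS dsum_fin[OF fS, of adj] by (intro card_mono) auto
  also have "\<dots> \<le> dsum adj S + card (W\<times>W - S\<times>S)" unfolding dsum_def by (rule card_Un_le)
  also have "card (W\<times>W - S\<times>S) = card W * card W - card S * card S"
    using assms fS by (subst card_Diff_subset) (auto simp: card_cartesian_product)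
  finally show ?thesis .
qed

lemma lim_from_bounds:
  fixes x :: "nat \<Rightarrow> real"
  assumes lo: "\<forall>n\<ge>2. L - 1/(real n - 1) \<le> x n" and up: "\<forall>\<delta>>0. \<exists>N. \<forall>n\<ge>N. x n \<le> L + \<delta>"
  shows "x \<longlonglongrightarrow> L"
proof (rule LIMSEQ_I)
  fix d :: real assume d: "0 < d"
  have "0 < d/2" using d by simp
  then obtain N where N: "\<forall>n\<ge>N. x n \<le> L + d/2" using up by blast
  define M where "M = max N (nat \<lceil>2/d\<rceil> + 2)"
  show "\<exists>no. \<forall>n\<ge>no. norm (x n - L) < d"
  proof (intro exI[of _ M] allI impI)
    fix n assume n: "M \<le> n"
    have n2: "2 \<le> n" using n unfolding M_def by simp
    have a1: "2/d \<le> real n - 2" using n unfolding M_def by linarith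
    have a2: "0 < 1/d" using d by simp
    have a3: "2/d = 2 * (1/d)" by simp
    have "1/d < real n - 1" using a1 a2 a3 by linarith
    then have "1 < (real n - 1) * d" using d by (simp add: divide_less_eq)
    moreover have "0 < real n - 1" using n2 by simp
    ultimately have "1/(real n - 1) < d" by (simp add: divide_less_eq mult.commute)
    moreover have "L - 1/(real n - 1) \<le> x n" using lo n2 by blast
    ultimately have "L - d < x n" by linarith
    moreover have "x n \<le> L + d/2" using N n unfolding M_def by simp
    ultimately show "norm (x n - L) < d" using d by simp
  qed
qed



theorem mainTheorem7:
  fixes V :: "'a set" and E :: "'a set set"
  assumes "hypergraph V E"
    and "edge_sizes E = {1, 2}"
    and "\<not> bipartite V (two_edges E)"
  shows "(\<lambda>n. pi_n V E n) \<longlonglongrightarrow> 1 + lim (\<lambda>n. pi_n V (two_edges E) n)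
     \<and> (\<lambda>n. pi_n V (two_edges E) n) \<longlonglongrightarrow>
           1 - 1 / (real (chromatic_number V (two_edges E)) - 1)
     \<and> (\<lambda>n. pi_n V E n) \<longlonglongrightarrow>
           2 - 1 / (real (chromatic_number V (two_edges E)) - 1)"
proof -
  have fV: "finite V" and EV: "E \<subseteq> Pow V" using assms(1) unfolding hypergraph_def by auto
  define E2 where "E2 = two_edges E"
  have E2E: "E2 \<subseteq> E" unfolding E2_def two_edges_def by auto
  have E2c: "\<forall>F\<in>E2. card F = 2" unfolding E2_def two_edges_def by auto
  have E2V: "E2 \<subseteq> Pow V" using E2E EV by auto
  have szE: "\<forall>F\<in>E. card F = 1 \<or> card F = 2"
  proof
    fix F assume "F \<in> E"
    then have "card F \<in> card ` E" by simp
    then show "card F = 1 \<or> card F = 2" using assms(2) unfolding edge_sizes_def by auto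
  qed
  have Ene: "E \<noteq> {}" using assms(2) unfolding edge_sizes_def by auto
  have nb: "\<not> colourable V E2 2" using assms(3) unfolding bipartite_def E2_def .
  have E2ne: "E2 \<noteq> {}"
  proof
    assume "E2 = {}"
    then have "colourable V E2 2" unfolding colourable_def by (intro exI[of _ "\<lambda>_. 0"]) auto
    then show False using nb by simp
  qed
  have es2: "edge_sizes E2 = {2}" using E2ne E2c unfolding edge_sizes_def by auto
  have colV: "colourable V E2 (card V)"
  proof -
    obtain idx where idx: "bij_betw idx V {0..<card V}" using ex_bij_betw_finite_nat[OF fV] by blast
    show ?thesis unfolding colourable_def
    proof (intro exI[of _ idx] conjI ballI impI)
      show "idx ` V \<subseteq> {..<card V}" using idx unfolding bij_betw_def by auto
    next
      fix F x y assume F: "F \<in> E2" "x \<in> F" "y \<in> F" "x \<noteq> y"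
      then have "x \<in> V" "y \<in> V" using E2V by auto
      then show "idx x \<noteq> idx y" using F(4) idx unfolding bij_betw_def inj_on_def by blast
    qed
  qed
  define chi where "chi = chromatic_number V E2"
  have colchi: "colourable V E2 chi" unfolding chi_def chromatic_number_def by (rule LeastI) (rule colV)
  have notcol: "\<not> colourable V E2 k" if "k < chi" for k
    using that unfolding chi_def chromatic_number_def by (rule not_less_Least)
  have mono: "colourable V E2 k'" if "colourable V E2 k" "k \<le> k'" for k k'
    using that unfolding colourable_def by (meson lessThan_subset_iff order_trans)
  have chi3: "3 \<le> chi"
  proof (rule ccontr)
    assume "\<not> 3 \<le> chi"
    then have "colourable V E2 2" using mono[OF colchi] by simp
    then show False using nb by simp
  qed
  define r where "r = chi - 1"
  have chiS: "chi = Suc r" unfolding r_def using chi3 by simp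
  have r2: "2 \<le> r" using chi3 chiS by simp
  have r0: "0 < r" using r2 by simp
  have ncr: "\<not> colourable V E2 r" using notcol chiS by simp
  obtain c where c: "c ` V \<subseteq> {..<Suc r}" "\<forall>F\<in>E2. \<forall>x\<in>F. \<forall>y\<in>F. x \<noteq> y \<longrightarrow> c x \<noteq> c y"
    using colchi chiS unfolding colourable_def by blast
  have cV: "\<forall>x\<in>V. c x < Suc r" using c(1) by auto
  define a where "a = 1 - 1/real r"
  have ra: "(real r - 1)/real r = a" unfolding a_def using r0 by (simp add: diff_divide_distrib)
  have rchi: "real chi - 1 = real r" using chiS by simp
  have a12: "1/2 \<le> a" "a \<le> 1" "0 \<le> a" unfolding a_def using r2 by (auto simp: field_simps)
  have Tc: "\<forall>F\<in>Tur r n. card F = 2" for n unfolding Tur_def by (force simp: card_2_iff)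
  have TP: "Tur r n \<subseteq> Pow {0..<n}" for n unfolding Tur_def by auto
  have L2: "\<forall>n\<ge>2. a - 1/(real n - 1) \<le> pi_n V E2 n"
  proof (intro allI impI)
    fix n :: nat assume n: "2 \<le> n"
    have "edge_sizes (Tur r n) \<subseteq> edge_sizes E2" using Tc[of n] es2 unfolding edge_sizes_def by auto
    moreover have "\<not> hyp_sub V E2 {0..<n} (Tur r n)"
    proof
      assume "hyp_sub V E2 {0..<n} (Tur r n)"
      then have "colourable V E2 r" using tur_no_embed[OF r0 E2c E2V order_refl] by blast
      then show False using ncr by simp
    qed
    ultimately have "Tur r n \<in> piset V E2 n" using TP unfolding piset_def by blast
    then have le: "lubell n (Tur r n) \<le> pi_n V E2 n" by (rule pi_ge)
    have Sg0: "Sg (Tur r n) n = {}" unfolding Sg_def using Tc[of n] by fastforce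
    have lf: "lubell n (Tur r n) = real (dsum (adjG (Tur r n)) {0..<n}) / (real n * (real n - 1))"
      using lubell_formula[OF TP, of n] Tc[of n] n Sg0 by simp
    have "real n * real n - real n * (real n / real r + 1) \<le> real (dsum (adjG (Tur r n)) {0..<n})"
      by (rule tur_count[OF r0 order_refl])
    then have "(1 - 1/real r) - 1/(real n - 1) \<le> lubell n (Tur r n)"
      unfolding lf using n r0 by (intro ineqL) auto
    then show "a - 1/(real n - 1) \<le> pi_n V E2 n" using le unfolding a_def by linarith
  qed
  have LH: "\<forall>n\<ge>2. (1 + a) - 1/(real n - 1) \<le> pi_n V E n"
  proof (intro allI impI)
    fix n :: nat assume n: "2 \<le> n"
    define G' where "G' = Tur r n \<union> Sing n"
    have GP: "G' \<subseteq> Pow {0..<n}" unfolding G'_def Sing_def using TP[of n] by auto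
    have Gs: "\<forall>F\<in>G'. card F = 1 \<or> card F = 2" unfolding G'_def Sing_def using Tc[of n] by auto
    have "edge_sizes G' \<subseteq> edge_sizes E" using Gs assms(2) unfolding edge_sizes_def by auto
    moreover have "\<not> hyp_sub V E {0..<n} G'"
    proof
      assume "hyp_sub V E {0..<n} G'"
      then have "colourable V E2 r" using tur_no_embed[OF r0 E2c E2V E2E] unfolding G'_def by blast
      then show False using ncr by simp
    qed
    ultimately have "G' \<in> piset V E n" using GP unfolding piset_def by blast
    then have le: "lubell n G' \<le> pi_n V E n" by (rule pi_ge)
    have Sgn: "Sg G' n = {0..<n}" unfolding Sg_def G'_def Sing_def by auto
    have lf: "lubell n G' = 1 + real (dsum (adjG G') {0..<n}) / (real n * (real n - 1))"
      using lubell_formula[OF GP Gs n] Sgn n by simp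
    have "real n * real n - real n * (real n / real r + 1) \<le> real (dsum (adjG G') {0..<n})"
      by (rule tur_count[OF r0]) (simp add: G'_def)
    then have "(1 - 1/real r) - 1/(real n - 1) \<le> real (dsum (adjG G') {0..<n}) / (real n * (real n - 1))"
      using n r0 by (intro ineqL) auto
    then show "(1 + a) - 1/(real n - 1) \<le> pi_n V E n" using le lf unfolding a_def by linarith
  qed
  have U2: "\<forall>\<delta>>0. \<exists>N. \<forall>n\<ge>N. pi_n V E2 n \<le> a + \<delta>"
  proof (intro allI impI)
    fix \<delta> :: real assume d: "0 < \<delta>"
    define e where "e = \<delta>/2"
    have e0: "0 < e" using d unfolding e_def by simp
    obtain C where C: "0 \<le> C" "\<forall>adj W. (\<forall>x y. adj x y \<longrightarrow> adj y x) \<longrightarrow> (\<forall>x. \<not> adj x x) \<longrightarrow> finite W \<longrightarrow>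
        \<not> hasK adj W r (card V) \<longrightarrow>
        real (dsum adj W) \<le> ((real r - 1)/real r + e) * real (card W) * (real (card W) + 1) + C"
      using turan_bound[OF e0, of r "card V"] by blast
    define N where "N = max 2 (nat \<lceil>(3 + 3*e + C)/e\<rceil>)"
    show "\<exists>N. \<forall>n\<ge>N. pi_n V E2 n \<le> a + \<delta>"
    proof (intro exI[of _ N] allI impI)
      fix n assume nN: "N \<le> n"
      have n: "2 \<le> n" using nN unfolding N_def by simp
      have "(3 + 3*e + C)/e \<le> real n" using nN unfolding N_def by linarith
      then have big: "3 + 3*e + C \<le> e * real n" using e0 by (simp add: divide_le_eq mult.commute)
      obtain G where G: "G \<in> piset V E2 n" "pi_n V E2 n = lubell n G" using pi_att[OF E2ne] by blast
      have GP: "G \<subseteq> Pow {0..<n}" and Gs: "edge_sizes G \<subseteq> {2}" and nh: "\<not> hyp_sub V E2 {0..<n} G"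
        using G(1) es2 unfolding piset_def by auto
      have Gc: "\<forall>F\<in>G. card F = 2" using Gs unfolding edge_sizes_def by auto
      have nK: "\<not> hasK (adjG G) {0..<n} r (card V)"
      proof
        assume K: "hasK (adjG G) {0..<n} r (card V)"
        have "hyp_sub V E2 {0..<n} G"
        proof (rule embed[OF fV E2V cV _ _ _ order_refl K])
          show "\<forall>F\<in>E2. card F = 2 \<longrightarrow> (\<forall>x\<in>F. \<forall>y\<in>F. x \<noteq> y \<longrightarrow> c x \<noteq> c y)"
            using c(2) by blast
          show "\<forall>F\<in>E2. card F = 1 \<or> card F = 2" using E2c by blast
          show "\<forall>F\<in>E2. card F = 1 \<longrightarrow> (\<forall>x\<in>{0..<n}. {x} \<in> G)" using E2c by simp
        qed
        then show False using nh by simp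
      qed
      have ds: "real (dsum (adjG G) {0..<n}) \<le> (a + e) * real n * (real n + 1) + C"
        using C(2)[rule_format, OF adjG_sym[rule_format] adjG_irr[rule_format] finite_atLeastLessThan nK] ra by simp
      have Sg0: "Sg G n = {}" unfolding Sg_def using Gc by fastforce
      have lf: "lubell n G = real (dsum (adjG G) {0..<n}) / (real n * (real n - 1))"
        using lubell_formula[OF GP] Gc n Sg0 by simp
      have "lubell n G \<le> a + 2*e" unfolding lf using a12 e0 C(1) n big ds by (intro ineqB) auto
      then show "pi_n V E2 n \<le> a + \<delta>" using G(2) unfolding e_def by simp
    qed
  qed
  have UH: "\<forall>\<delta>>0. \<exists>N. \<forall>n\<ge>N. pi_n V E n \<le> (1 + a) + \<delta>"
  proof (intro allI impI)
    fix \<delta> :: real assume d: "0 < \<delta>"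
    define e where "e = \<delta>/2"
    have e0: "0 < e" using d unfolding e_def by simp
    obtain C where C: "0 \<le> C" "\<forall>adj W. (\<forall>x y. adj x y \<longrightarrow> adj y x) \<longrightarrow> (\<forall>x. \<not> adj x x) \<longrightarrow> finite W \<longrightarrow>
        \<not> hasK adj W r (card V) \<longrightarrow>
        real (dsum adj W) \<le> ((real r - 1)/real r + e) * real (card W) * (real (card W) + 1) + C"
      using turan_bound[OF e0, of r "card V"] by blast
    define N where "N = max 2 (nat \<lceil>(3 + 3*e + C)/e\<rceil>)"
    show "\<exists>N. \<forall>n\<ge>N. pi_n V E n \<le> (1 + a) + \<delta>"
    proof (intro exI[of _ N] allI impI)
      fix n assume nN: "N \<le> n"
      have n: "2 \<le> n" using nN unfolding N_def by simp
      have "(3 + 3*e + C)/e \<le> real n" using nN unfolding N_def by linarith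
      then have big: "3 + 3*e + C \<le> e * real n" using e0 by (simp add: divide_le_eq mult.commute)
      obtain G where G: "G \<in> piset V E n" "pi_n V E n = lubell n G" using pi_att[OF Ene] by blast
      have GP: "G \<subseteq> Pow {0..<n}" and Gs: "edge_sizes G \<subseteq> {1,2}" and nh: "\<not> hyp_sub V E {0..<n} G"
        using G(1) assms(2) unfolding piset_def by auto
      have Gc: "\<forall>F\<in>G. card F = 1 \<or> card F = 2" using Gs unfolding edge_sizes_def by auto
      define S where "S = Sg G n"
      have Sn: "S \<subseteq> {0..<n}" unfolding S_def Sg_def by auto
      have nK: "\<not> hasK (adjG G) S r (card V)"
      proof
        assume K: "hasK (adjG G) S r (card V)"
        have "hyp_sub V E {0..<n} G"
        proof (rule embed[OF fV EV cV _ szE _ Sn K])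
          show "\<forall>F\<in>E. card F = 2 \<longrightarrow> (\<forall>x\<in>F. \<forall>y\<in>F. x \<noteq> y \<longrightarrow> c x \<noteq> c y)"
            using c(2) unfolding E2_def two_edges_def by auto
          show "\<forall>F\<in>E. card F = 1 \<longrightarrow> (\<forall>x\<in>S. {x} \<in> G)" unfolding S_def Sg_def by auto
        qed
        then show False using nh by simp
      qed
      have finS: "finite S" using Sn finite_subset by blast
      define s where "s = card S"
      have sn: "s \<le> n" unfolding s_def using card_mono[OF _ Sn] by simp
      have dS: "real (dsum (adjG G) S) \<le> (a + e) * real s * (real s + 1) + C"
        using C(2)[rule_format, OF adjG_sym[rule_format] adjG_irr[rule_format] finS nK] ra unfolding s_def by simp
      have "dsum (adjG G) {0..<n} \<le> dsum (adjG G) S + (n * n - s * s)"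
        using dsum_split[OF Sn] unfolding s_def by simp
      moreover have "s * s \<le> n * n" using sn by (intro mult_mono) auto
      ultimately have dn: "real (dsum (adjG G) {0..<n}) \<le> real (dsum (adjG G) S) + real n * real n - real s * real s"
      proof -
        assume h1: "dsum (adjG G) {0..<n} \<le> dsum (adjG G) S + (n * n - s * s)" and h2: "s * s \<le> n * n"
        have "real (dsum (adjG G) {0..<n}) \<le> real (dsum (adjG G) S + (n * n - s * s))"
          using h1 by (simp only: of_nat_le_iff)
        also have "\<dots> = real (dsum (adjG G) S) + real n * real n - real s * real s"
          using h2 by (simp add: of_nat_diff)
        finally show ?thesis .
      qed
      have lf: "lubell n G = real s / real n + real (dsum (adjG G) {0..<n}) / (real n * (real n - 1))"
        using lubell_formula[OF GP Gc n] unfolding s_def S_def by simp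
      have np: "0 < real n * (real n - 1)" using n by simp
      have "real (dsum (adjG G) {0..<n}) / (real n * (real n - 1))
          \<le> ((a + e) * real s * (real s + 1) + C + real n * real n - real s * real s) / (real n * (real n - 1))"
        using dn dS np by (intro divide_right_mono) auto
      moreover have "real s / real n + ((a + e) * real s * (real s + 1) + C + real n * real n - real s * real s) / (real n * (real n - 1))
          \<le> 1 + a + 2*e"
        using a12 e0 C(1) n big sn by (intro ineqA) auto
      ultimately have "lubell n G \<le> 1 + a + 2*e" unfolding lf by linarith
      then show "pi_n V E n \<le> (1 + a) + \<delta>" using G(2) unfolding e_def by simp
    qed
  qed
  have lim2: "(\<lambda>n. pi_n V E2 n) \<longlonglongrightarrow> a" by (rule lim_from_bounds[OF L2 U2])
  have limH: "(\<lambda>n. pi_n V E n) \<longlonglongrightarrow> 1 + a" by (rule lim_from_bounds[OF LH UH])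
  have la: "lim (\<lambda>n. pi_n V E2 n) = a" using lim2 by (rule limI)
  have t1: "1 - 1 / (real (chromatic_number V (two_edges E)) - 1) = a"
    using rchi unfolding chi_def E2_def a_def by simp
  have t2: "2 - 1 / (real (chromatic_number V (two_edges E)) - 1) = 1 + a"
    using rchi unfolding chi_def E2_def a_def by simp
  show ?thesis using lim2 limH la unfolding t1 t2 E2_def by simp
qed


end
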